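(* In Algorithm MV (see context), if all processes are correct and they all propose the same value $v$, then WHP all processes decide $v$.
   Context: System and adversary: a well-known static set $\Pi$ of $n$ processes; an adversary may adaptively corrupt up to $f=(\frac13-\epsilon)n$ processes during a run, where $\frac{1}{2\ln n}<\epsilon<\frac13$. Corrupted (Byzantine) processes may deviate arbitrarily; uncorrupted processes are correct. Once the adversary corrupts a process it cannot replace messages that process already sent while correct. Every pair of processes is connected by a reliable authenticated link; the network is asynchronous. There is a trusted PKI; the adversary is computationally bounded; $\langle v\rangle_i$ denotes $v$ signed by $p_i$. Validated committee sampling: each $p_i$ has a private function $\mathit{sample}_i(s,\lambda)$ returning $\langle v_i,\sigma_i\rangle$ with $v_i\in\{\mathit{true},\mathit{false}\}$ ($p_i$ is "sampled" iff $v_i=\mathit{true}$, probability $\lambda/n$) and an unforgeable publicly verifiable proof $\sigma_i$; "validly sampled $p_j$" means the message carries a valid such proof. Let $C(s,\lambda)$ be the committee for $s,\lambda$. Parameters: $\lambda=8\ln n$; $\frac1\lambda<d<\frac\epsilon3-\frac1{3\lambda}$; $W=\lceil(\frac23+3d)\lambda\rceil$, $B=\lfloor(\frac13-d)\lambda\rfloor$. Assumed WHP for each committee: (S3) at least $W$ members are correct; (S4) at most $B$ members are Byzantine; (S5) any two $W$-subsets of the committee intersect in at least $B+1$ processes. WHP means with probability tending to $1$ as $n\to\infty$. The binary BA used is a black-box Binary Strong BA WHP: WHP strong unanimity (if all correct processes propose the same bit, any deciding correct process decides it), agreement, and termination. Algorithm MV (code for $p_i$ with input $v_i$; local: $\mathit{count}=0$,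 empty sets $\mathit{init\text{-}set},\mathit{init\text{-}values\text{-}set},\mathit{converge\text{-}set}$): (1) If $p_i$ is sampled for $(\textsc{init},\lambda)$, broadcast $\langle\textsc{init},v_i\rangle_i$. (2) On receiving $\langle\textsc{init},v_j\rangle_j$ from validly sampled $p_j$: add $j$ to $\mathit{init\text{-}set}$, $v_j$ to $\mathit{init\text{-}values\text{-}set}$. If $p_i$ is sampled for $(\textsc{converge},\lambda)$ and $|\mathit{init\text{-}set}|=W$ for the first time: if $\mathit{init\text{-}values\text{-}set}=\{v_i\}$, batch the $W$ signed \textsc{init} messages into $QC_{v_i}$ and send $\langle\textsc{converge},\mathit{true},QC_{v_i}\rangle_i$ to all; else send $\langle\textsc{converge},\mathit{false},\bot\rangle_i$ to all. (3) On receiving $\langle\textsc{converge},\mathit{is\_content},QC_v\rangle_j$ from validly sampled $p_j$: add $j$ to $\mathit{converge\text{-}set}$; if $\mathit{is\_content}=\mathit{true}$ increment $\mathit{count}$. When $|\mathit{converge\text{-}set}|=W$ for the first time: $\mathit{alert}\gets(\mathit{count}<B+1)$; run binary BA on $\mathit{alert}$; if the output is $\mathit{true}$ decide $\bot$; else wait for some $\langle\textsc{converge},\mathit{true},QC_v\rangle_j$ from a validly sampled $p_j$ and decide $v$. A valid $QC_v$ consists of $W$ signed \textsc{init} messages on $v$ from $W$ distinct validly sampled processes. *)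

theory Defs
  imports "HOL-Probability.Probability"
begin

datatype tag = Init | Converge

datatype 'v decision = Bot | Val 'v

(* Abstract record of a run of Algorithm MV in which every process is correct.
   Processes are 0..<n.
   sampled s i : result v_i of sample_i(s, lambda) (lambda = 8 ln n)
   input i     : the proposal v_i of p_i
   t_init j i  : (global) time at which p_j receives the INIT message of p_i
   t_conv k j  : (global) time at which p_k receives the CONVERGE message of p_j
   ba_out k    : output of the binary BA at p_k (None = never outputs)
   decided k   : decision of p_k (None = never decides) *)
record 'v mv_run =
  sampled :: "tag \<Rightarrow> nat \<Rightarrow> bool"
  input :: "nat \<Rightarrow> 'v"
  t_init :: "nat \<Rightarrow> nat \<Rightarrow> nat"
  t_conv :: "nat \<Rightarrow> nat \<Rightarrow> nat"
  ba_out :: "nat \<Rightarrow> bool option"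
  decided :: "nat \<Rightarrow> 'v decision option"

definition lam :: "nat \<Rightarrow> real" where
  "lam n = 8 * ln (real n)"

definition Wq :: "(nat \<Rightarrow> real) \<Rightarrow> nat \<Rightarrow> nat" where
  "Wq d n = nat \<lceil>(2/3 + 3 * d n) * lam n\<rceil>"

definition Bq :: "(nat \<Rightarrow> real) \<Rightarrow> nat \<Rightarrow> nat" where
  "Bq d n = nat \<lfloor>(1/3 - d n) * lam n\<rfloor>"

definition committee :: "nat \<Rightarrow> 'v mv_run \<Rightarrow> tag \<Rightarrow> nat set" where
  "committee n r s = {i. i < n \<and> sampled r s i}"

definition init_set_at :: "nat \<Rightarrow> 'v mv_run \<Rightarrow> nat \<Rightarrow> nat \<Rightarrow> nat set" where
  "init_set_at n r j t = {i. i \<in> committee n r Init \<and> t_init r j i \<le> t}"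

definition reaches_init :: "nat \<Rightarrow> nat \<Rightarrow> 'v mv_run \<Rightarrow> nat \<Rightarrow> bool" where
  "reaches_init n W r j \<longleftrightarrow> (\<exists>t. card (init_set_at n r j t) = W)"

definition init_thr_time :: "nat \<Rightarrow> nat \<Rightarrow> 'v mv_run \<Rightarrow> nat \<Rightarrow> nat" where
  "init_thr_time n W r j = (LEAST t. card (init_set_at n r j t) = W)"

definition init_qc_set :: "nat \<Rightarrow> nat \<Rightarrow> 'v mv_run \<Rightarrow> nat \<Rightarrow> nat set" where
  "init_qc_set n W r j = init_set_at n r j (init_thr_time n W r j)"

definition conv_sent :: "nat \<Rightarrow> nat \<Rightarrow> 'v mv_run \<Rightarrow> nat \<Rightarrow> bool" where
  "conv_sent n W r j \<longleftrightarrow> j \<in> committee n r Converge \<and> reaches_init n W r j"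

(* is_content flag of p_j's CONVERGE message (init-values-set = {v_j});
   if true it carries QC_{v_j} *)
definition conv_content :: "nat \<Rightarrow> nat \<Rightarrow> 'v mv_run \<Rightarrow> nat \<Rightarrow> bool" where
  "conv_content n W r j \<longleftrightarrow> input r ` init_qc_set n W r j = {input r j}"

definition conv_set_at :: "nat \<Rightarrow> nat \<Rightarrow> 'v mv_run \<Rightarrow> nat \<Rightarrow> nat \<Rightarrow> nat set" where
  "conv_set_at n W r k t = {j. conv_sent n W r j \<and> t_conv r k j \<le> t}"

definition reaches_conv :: "nat \<Rightarrow> nat \<Rightarrow> 'v mv_run \<Rightarrow> nat \<Rightarrow> bool" where
  "reaches_conv n W r k \<longleftrightarrow> (\<exists>t. card (conv_set_at n W r k t) = W)"

definition conv_thr_time :: "nat \<Rightarrow> nat \<Rightarrow> 'v mv_run \<Rightarrow> nat \<Rightarrow> nat" where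
  "conv_thr_time n W r k = (LEAST t. card (conv_set_at n W r k t) = W)"

definition conv_count :: "nat \<Rightarrow> nat \<Rightarrow> 'v mv_run \<Rightarrow> nat \<Rightarrow> nat" where
  "conv_count n W r k =
     card {j \<in> conv_set_at n W r k (conv_thr_time n W r k). conv_content n W r j}"

definition ba_in :: "nat \<Rightarrow> nat \<Rightarrow> nat \<Rightarrow> 'v mv_run \<Rightarrow> nat \<Rightarrow> bool option" where
  "ba_in n W B r k =
     (if reaches_conv n W r k then Some (conv_count n W r k < B + 1) else None)"

(* r is a (fault-free, asynchronous, reliable-link) execution of Algorithm MV *)
definition mv_execution :: "nat \<Rightarrow> nat \<Rightarrow> nat \<Rightarrow> 'v mv_run \<Rightarrow> bool" where
  "mv_execution n W B r \<longleftrightarrow>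
     (\<forall>j<n. inj_on (t_init r j) (committee n r Init)) \<and>
     (\<forall>k<n. inj_on (t_conv r k) {j. conv_sent n W r j}) \<and>
     (\<forall>k<n. \<forall>j. conv_sent n W r j \<longrightarrow> init_thr_time n W r j < t_conv r k j) \<and>
     (\<forall>k<n. ba_out r k \<noteq> None \<longrightarrow> ba_in n W B r k \<noteq> None) \<and>
     (\<forall>k<n.
        (decided r k = Some Bot \<longleftrightarrow> ba_out r k = Some True) \<and>
        (\<forall>w. decided r k = Some (Val w) \<longrightarrow>
              ba_out r k = Some False \<and>
              (\<exists>j. conv_sent n W r j \<and> conv_content n W r j \<and> w = input r j)) \<and>
        (ba_out r k = Some False \<and> (\<exists>j. conv_sent n W r j \<and> conv_content n W r j)
           \<longrightarrow> decided r k \<noteq> None))"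

(* the black-box binary BA instance satisfies strong unanimity, agreement, termination *)
definition binary_ba_ok :: "nat \<Rightarrow> nat \<Rightarrow> nat \<Rightarrow> 'v mv_run \<Rightarrow> bool" where
  "binary_ba_ok n W B r \<longleftrightarrow>
     (\<forall>b. (\<forall>k<n. ba_in n W B r k = Some b) \<longrightarrow>
          (\<forall>k<n. ba_out r k \<noteq> None \<longrightarrow> ba_out r k = Some b)) \<and>
     (\<forall>k<n. \<forall>k'<n. \<forall>b b'. ba_out r k = Some b \<and> ba_out r k' = Some b' \<longrightarrow> b = b') \<and>
     ((\<forall>k<n. ba_in n W B r k \<noteq> None) \<longrightarrow> (\<forall>k<n. ba_out r k \<noteq> None))"

definition committee_props :: "nat \<Rightarrow> nat \<Rightarrow> nat set \<Rightarrow> nat set \<Rightarrow> bool" where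
  "committee_props W B correct C \<longleftrightarrow>
     W \<le> card (C \<inter> correct) \<and>
     card (C - correct) \<le> B \<and>
     (\<forall>S1 S2. S1 \<subseteq> C \<and> S2 \<subseteq> C \<and> card S1 = W \<and> card S2 = W \<longrightarrow> B + 1 \<le> card (S1 \<inter> S2))"

definition whp :: "(nat \<Rightarrow> 'w measure) \<Rightarrow> (nat \<Rightarrow> 'w \<Rightarrow> bool) \<Rightarrow> bool" where
  "whp M P \<longleftrightarrow>
     (\<exists>E. (\<forall>n. E n \<in> sets (M n) \<and> E n \<subseteq> {\<omega> \<in> space (M n). P n \<omega>}) \<and>
          (\<lambda>n. measure (M n) (E n)) \<longlonglongrightarrow> 1)"

end

theory Submission
  imports Defs
begin

lemma prob_int_ge:
  assumes P: "prob_space M" and A: "A \<in> sets M" and B: "B \<in> sets M"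
  shows "measure M A + measure M B - 1 \<le> measure M (A \<inter> B)"
proof -
  interpret prob_space M by fact
  have "measure M (A \<union> B) = measure M A + measure M B - measure M (A \<inter> B)"
    using A B by (simp add: measure_Un3 fmeasurable_eq_sets)
  moreover have "measure M (A \<union> B) \<le> 1" by (rule prob_le_1)
  ultimately show ?thesis by linarith
qed

lemma discrete_ivt:
  fixes g :: "nat \<Rightarrow> nat"
  assumes g0: "g 0 \<le> W" and step: "\<And>t. g (Suc t) \<le> g t + 1"
  shows "W \<le> g m \<Longrightarrow> \<exists>t. g t = W"
proof (induction m)
  case 0 then show ?case using g0 by (intro exI[of _ 0]) simp
next
  case (Suc m)
  show ?case
  proof (cases "W \<le> g m")
    case True then show ?thesis using Suc.IH by blast
  next
    case False then show ?thesis using Suc.prems step[of m] by (intro exI[of _ "Suc m"]) simp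
  qed
qed

lemma reach:
  fixes f :: "nat \<Rightarrow> nat"
  assumes fin: "finite C" and inj: "inj_on f C" and WC: "W \<le> card C" and W1: "1 \<le> W"
  shows "\<exists>t. card {i\<in>C. f i \<le> t} = W"
proof -
  define g where "g t = card {i\<in>C. f i \<le> t}" for t
  have le1: "card {i\<in>C. f i = t} \<le> 1" for t
  proof -
    have "{i\<in>C. f i = t} \<subseteq> {i. i \<in> C \<and> f i = t}" by blast
    have "\<forall>x\<in>{i\<in>C. f i = t}. \<forall>y\<in>{i\<in>C. f i = t}. x = y"
      using inj by (auto simp: inj_on_def)
    then show ?thesis using card_le_Suc0_iff_eq[of "{i\<in>C. f i = t}"] fin by auto
  qed
  have g0: "g 0 \<le> W"
  proof -
    have "g 0 = card {i\<in>C. f i = 0}" unfolding g_def by simp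
    then show ?thesis using le1[of 0] W1 by linarith
  qed
  have step: "g (Suc t) \<le> g t + 1" for t
  proof -
    have "{i\<in>C. f i \<le> Suc t} = {i\<in>C. f i \<le> t} \<union> {i\<in>C. f i = Suc t}" by auto
    then have "g (Suc t) \<le> g t + card {i\<in>C. f i = Suc t}"
      unfolding g_def by (metis card_Un_le)
    then show ?thesis using le1[of "Suc t"] by linarith
  qed
  have big: "W \<le> g (Max (insert 0 (f ` C)))"
  proof -
    have "{i\<in>C. f i \<le> Max (insert 0 (f ` C))} = C" using fin by auto
    then show ?thesis using WC unfolding g_def by simp
  qed
  show ?thesis using discrete_ivt[OF g0 step big] unfolding g_def by blast
qed

lemma core:
  fixes r :: "'v mv_run"
  assumes exec: "mv_execution n W B r"
    and inp: "\<forall>i<n. input r i = v"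
    and ci: "committee_props W B {..<n} (committee n r Init)"
    and cc: "committee_props W B {..<n} (committee n r Converge)"
    and ba: "binary_ba_ok n W B r"
    and W1: "1 \<le> W" and WB: "B + 1 \<le> W"
  shows "\<forall>k<n. decided r k = Some (Val v)"
proof -
  have csub: "committee n r s \<subseteq> {..<n}" for s unfolding committee_def by auto
  have cfin: "finite (committee n r s)" for s using csub finite_subset by blast
  have cint: "committee n r s \<inter> {..<n} = committee n r s" for s using csub by blast
  have ciW: "W \<le> card (committee n r Init)" using ci cint unfolding committee_props_def by simp
  have ccW: "W \<le> card (committee n r Converge)" using cc cint unfolding committee_props_def by simp
  note ED = exec[unfolded mv_execution_def]
  note E1 = ED[THEN conjunct1]
  note E2 = ED[THEN conjunct2, THEN conjunct1]
  note E5 = ED[THEN conjunct2, THEN conjunct2, THEN conjunct2, THEN conjunct2]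
  have rinit: "reaches_init n W r j" if "j < n" for j
  proof -
    have "{i\<in>committee n r Init. t_init r j i \<le> t} = init_set_at n r j t" for t
      unfolding init_set_at_def by auto
    then show ?thesis using reach[OF cfin E1[rule_format, OF that] ciW W1]
      unfolding reaches_init_def by auto
  qed
  have cs_eq: "{j. conv_sent n W r j} = committee n r Converge"
    using rinit csub unfolding conv_sent_def by auto
  have content: "conv_content n W r j" if "conv_sent n W r j" for j
  proof -
    have jn: "j < n" using that csub unfolding conv_sent_def by auto
    have "reaches_init n W r j" using that unfolding conv_sent_def by auto
    then have "card (init_qc_set n W r j) = W"
      unfolding reaches_init_def init_qc_set_def init_thr_time_def by (rule LeastI_ex)
    then have ne: "init_qc_set n W r j \<noteq> {}" using W1 by auto
    have "init_qc_set n W r j \<subseteq> {..<n}"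
      unfolding init_qc_set_def init_set_at_def using csub by auto
    then have "input r ` init_qc_set n W r j = {v}" using ne inp by auto
    then show ?thesis unfolding conv_content_def using inp jn by simp
  qed
  have rconv: "reaches_conv n W r k" if "k < n" for k
  proof -
    have "{i\<in>committee n r Converge. t_conv r k i \<le> t} = conv_set_at n W r k t" for t
      unfolding conv_set_at_def using cs_eq by auto
    moreover have "inj_on (t_conv r k) (committee n r Converge)"
      using E2[rule_format, OF that] cs_eq by simp
    then obtain t where "card {i\<in>committee n r Converge. t_conv r k i \<le> t} = W"
      using reach[OF cfin _ ccW W1] by blast
    ultimately show ?thesis unfolding reaches_conv_def by metis
  qed
  have count: "conv_count n W r k = W" if "k < n" for k
  proof -
    have "card (conv_set_at n W r k (conv_thr_time n W r k)) = W"
      using rconv[OF that] unfolding reaches_conv_def conv_thr_time_def by (rule LeastI_ex)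
    moreover have "{j \<in> conv_set_at n W r k (conv_thr_time n W r k). conv_content n W r j}
        = conv_set_at n W r k (conv_thr_time n W r k)"
      using content unfolding conv_set_at_def by auto
    ultimately show ?thesis unfolding conv_count_def by simp
  qed
  have bain: "\<forall>k<n. ba_in n W B r k = Some False"
    using rconv count WB unfolding ba_in_def by auto
  note BD = ba[unfolded binary_ba_ok_def]
  have bout: "\<forall>k<n. ba_out r k = Some False"
  proof (intro allI impI)
    fix k assume k: "k < n"
    have "ba_out r k \<noteq> None" using BD[THEN conjunct2, THEN conjunct2] bain k by simp
    moreover have "\<forall>k<n. ba_out r k \<noteq> None \<longrightarrow> ba_out r k = Some False"
      using BD[THEN conjunct1, rule_format, of False] bain by simp
    ultimately show "ba_out r k = Some False" using k by simp
  qed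
  obtain j0 where j0: "j0 \<in> committee n r Converge"
  proof -
    have "committee n r Converge \<noteq> {}" using ccW W1 by (intro notI) simp
    then show ?thesis using that by blast
  qed
  have ex: "\<exists>j. conv_sent n W r j \<and> conv_content n W r j"
    using j0 cs_eq content by auto
  show ?thesis
  proof (intro allI impI)
    fix k assume k: "k < n"
    note E5k = E5[rule_format, OF k]
    have bk: "ba_out r k = Some False" using bout k by blast
    have "decided r k \<noteq> None" using E5k[THEN conjunct2, THEN conjunct2] bk ex by blast
    then obtain dd where dd: "decided r k = Some dd" by auto
    show "decided r k = Some (Val v)"
    proof (cases dd)
      case Bot then have "ba_out r k = Some True" using E5k[THEN conjunct1] dd by simp
      then show ?thesis using bk by simp
    next
      case (Val w)
      then have "\<exists>j. conv_sent n W r j \<and> conv_content n W r j \<and> w = input r j"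
        using E5k[THEN conjunct2, THEN conjunct1] dd by blast
      then obtain j where "conv_sent n W r j" "w = input r j" by blast
      moreover have "j < n" using calculation(1) csub unfolding conv_sent_def by auto
      ultimately show ?thesis using inp dd Val by simp
    qed
  qed
qed

lemma params_WB:
  assumes n2: "2 \<le> n" and d: "1 / lam n < d n"
  shows "1 \<le> Wq d n \<and> Bq d n + 1 \<le> Wq d n"
proof -
  have lp: "lam n > 0" unfolding lam_def using n2 by simp
  have "1 / lam n > 0" using lp by simp
  then have dp: "d n > 0" using d by linarith
  have x: "(2/3 + 3 * d n) * lam n > 0" using dp lp by simp
  have xy: "(1/3 - d n) * lam n < (2/3 + 3 * d n) * lam n" using dp lp by simp
  have c1: "\<lceil>(2/3 + 3 * d n) * lam n\<rceil> \<ge> 1" using x by (simp add: one_le_ceiling)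
  have "\<lfloor>(1/3 - d n) * lam n\<rfloor> < \<lceil>(2/3 + 3 * d n) * lam n\<rceil>"
  proof -
    have "real_of_int \<lfloor>(1/3 - d n) * lam n\<rfloor> < real_of_int \<lceil>(2/3 + 3 * d n) * lam n\<rceil>"
      using xy of_int_floor_le[of "(1/3 - d n) * lam n"] le_of_int_ceiling[of "(2/3 + 3 * d n) * lam n"]
      by linarith
    then show ?thesis by (simp only: of_int_less_iff)
  qed
  then show ?thesis using c1 unfolding Wq_def Bq_def by linarith
qed

theorem mainTheorem2:
  fixes M :: "nat \<Rightarrow> 'w measure"
    and R :: "nat \<Rightarrow> 'w \<Rightarrow> 'v mv_run"
    and v :: 'v
    and eps d :: "nat \<Rightarrow> real"
  assumes prob: "\<And>n. prob_space (M n)"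
    and params: "eventually (\<lambda>n. 1 / (2 * ln (real n)) < eps n \<and> eps n < 1/3 \<and>
                   1 / lam n < d n \<and> d n < eps n / 3 - 1 / (3 * lam n)) sequentially"
    and exec: "\<And>n \<omega>. \<omega> \<in> space (M n) \<Longrightarrow> mv_execution n (Wq d n) (Bq d n) (R n \<omega>)"
    and same_input: "\<And>n \<omega> i. \<omega> \<in> space (M n) \<Longrightarrow> i < n \<Longrightarrow> input (R n \<omega>) i = v"
    and S_init: "whp M (\<lambda>n \<omega>. committee_props (Wq d n) (Bq d n) {..<n} (committee n (R n \<omega>) Init))"
    and S_conv: "whp M (\<lambda>n \<omega>. committee_props (Wq d n) (Bq d n) {..<n} (committee n (R n \<omega>) Converge))"
    and BA: "whp M (\<lambda>n \<omega>. binary_ba_ok n (Wq d n) (Bq d n) (R n \<omega>))"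
  shows "whp M (\<lambda>n \<omega>. \<forall>k<n. decided (R n \<omega>) k = Some (Val v))"
proof -
  obtain E1 where E1: "\<And>n. E1 n \<in> sets (M n)"
    "\<And>n. E1 n \<subseteq> {\<omega> \<in> space (M n). committee_props (Wq d n) (Bq d n) {..<n} (committee n (R n \<omega>) Init)}"
    "(\<lambda>n. measure (M n) (E1 n)) \<longlonglongrightarrow> 1"
    using S_init unfolding whp_def by blast
  obtain E2 where E2: "\<And>n. E2 n \<in> sets (M n)"
    "\<And>n. E2 n \<subseteq> {\<omega> \<in> space (M n). committee_props (Wq d n) (Bq d n) {..<n} (committee n (R n \<omega>) Converge)}"
    "(\<lambda>n. measure (M n) (E2 n)) \<longlonglongrightarrow> 1"
    using S_conv unfolding whp_def by blast
  obtain E3 where E3: "\<And>n. E3 n \<in> sets (M n)"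
    "\<And>n. E3 n \<subseteq> {\<omega> \<in> space (M n). binary_ba_ok n (Wq d n) (Bq d n) (R n \<omega>)}"
    "(\<lambda>n. measure (M n) (E3 n)) \<longlonglongrightarrow> 1"
    using BA unfolding whp_def by blast
  have ev: "eventually (\<lambda>n. 2 \<le> n \<and> 1 / lam n < d n) sequentially"
    using params eventually_ge_at_top[of "2::nat"] by eventually_elim auto
  then obtain N where N: "\<And>n. N \<le> n \<Longrightarrow> 2 \<le> n \<and> 1 / lam n < d n"
    unfolding eventually_sequentially by blast
  define E where "E n = (if N \<le> n then E1 n \<inter> E2 n \<inter> E3 n else {})" for n
  show ?thesis unfolding whp_def
  proof (intro exI[of _ E] conjI allI)
    fix n
    show "E n \<in> sets (M n)" unfolding E_def using E1 E2 E3 by auto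
    show "E n \<subseteq> {\<omega> \<in> space (M n). \<forall>k<n. decided (R n \<omega>) k = Some (Val v)}"
    proof
      fix \<omega> assume w: "\<omega> \<in> E n"
      then have Nn: "N \<le> n" unfolding E_def by (auto split: if_splits)
      have in123: "\<omega> \<in> E1 n" "\<omega> \<in> E2 n" "\<omega> \<in> E3 n" using w Nn unfolding E_def by auto
      have sp: "\<omega> \<in> space (M n)" using in123(1) E1(2) by blast
      have WB: "1 \<le> Wq d n \<and> Bq d n + 1 \<le> Wq d n" using params_WB N[OF Nn] by blast
      have "\<forall>k<n. decided (R n \<omega>) k = Some (Val v)"
        apply (rule core[OF exec[OF sp]])
        using same_input[OF sp] in123 E1(2) E2(2) E3(2) WB by blast+
      then show "\<omega> \<in> {\<omega> \<in> space (M n). \<forall>k<n. decided (R n \<omega>) k = Some (Val v)}"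
        using sp by blast
    qed
  next
    have lower: "eventually (\<lambda>n. measure (M n) (E1 n) + measure (M n) (E2 n) + measure (M n) (E3 n) - 2
                   \<le> measure (M n) (E n)) sequentially"
      unfolding eventually_sequentially
    proof (intro exI[of _ N] allI impI)
      fix n assume "N \<le> n"
      then have eqE: "E n = E1 n \<inter> E2 n \<inter> E3 n" unfolding E_def by simp
      have "measure (M n) (E1 n) + measure (M n) (E2 n) - 1 \<le> measure (M n) (E1 n \<inter> E2 n)"
        using prob_int_ge[OF prob E1(1) E2(1)] .
      moreover have "measure (M n) (E1 n \<inter> E2 n) + measure (M n) (E3 n) - 1 \<le> measure (M n) (E1 n \<inter> E2 n \<inter> E3 n)"
        using prob_int_ge[OF prob _ E3(1)] E1(1) E2(1) by blast
      ultimately show "measure (M n) (E1 n) + measure (M n) (E2 n) + measure (M n) (E3 n) - 2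
                   \<le> measure (M n) (E n)" unfolding eqE by linarith
    qed
    have upper: "eventually (\<lambda>n. measure (M n) (E n) \<le> 1) sequentially"
      using prob_space.prob_le_1[OF prob] by simp
    have lim: "(\<lambda>n. measure (M n) (E1 n) + measure (M n) (E2 n) + measure (M n) (E3 n) - 2) \<longlonglongrightarrow> 1 + 1 + 1 - 2"
      by (intro tendsto_intros E1(3) E2(3) E3(3))
    show "(\<lambda>n. measure (M n) (E n)) \<longlonglongrightarrow> 1"
      by (rule tendsto_sandwich[OF lower upper]) (use lim in simp_all)
  qed
qed

end
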